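(* Let $\Omega\subset\mathbb{R}^n$, $n\ge 2$, be a bounded, simply connected domain with smooth boundary. Let $\sigma_{bg},\sigma_a\in L^\infty(\Omega)$ be real conductivities with positive essential infimum, let $D\subset\Omega$ be the (measurable) region occupied by the anomalies, $D=\bigcup_j D_j$ with the $D_j$ connected and pairwise disjoint, and set $\sigma_D=\sigma_{bg}$ on $\Omega\setminus D$ and $\sigma_D=\sigma_a$ on $D$. Assume the well-separation condition: either $\sigma_a^M<\sigma_{bg}^m$ or $\sigma_a^m>\sigma_{bg}^M$. Then for every $g\in H^{-1/2}_{\diamond}(\partial\Omega)$, $$\langle(\Lambda_D-\Lambda_{bg})g,g\rangle=0 \iff \int_D\sigma_{bg}(x)\,|\nabla u_{bg}(x)|^2\,dx=0,$$ where $u_{bg}\in H^1_\diamond(\Omega)$ is the weak solution of $\nabla\cdot(\sigma_{bg}\nabla u_{bg})=0$ in $\Omega$, $\sigma_{bg}\partial_n u_{bg}=g$ on $\partial\Omega$.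
   Context: $H^1_\diamond(\Omega)=\{u\in H^1(\Omega):\int_{\partial\Omega}u=0\}$, $H^{\pm1/2}_\diamond(\partial\Omega)=\{u\in H^{\pm1/2}(\partial\Omega):\int_{\partial\Omega}u=0\}$. For a conductivity $\sigma\in L^\infty(\Omega)$ with positive essential infimum and $g\in H^{-1/2}_\diamond(\partial\Omega)$, the solution $u\in H^1_\diamond(\Omega)$ of $\nabla\cdot(\sigma\nabla u)=0$ in $\Omega$, $\sigma\partial_n u=g$ on $\partial\Omega$ is understood weakly: $\int_\Omega\sigma\nabla u\cdot\nabla\varphi\,dx=\int_{\partial\Omega}g\varphi\,dx$ for all $\varphi\in H^1_\diamond(\Omega)$. The Neumann-to-Dirichlet operator is $\Lambda_\sigma:H^{-1/2}_\diamond(\partial\Omega)\to H^{1/2}_\diamond(\partial\Omega)$, $g\mapsto u|_{\partial\Omega}$; $\Lambda_D=\Lambda_{\sigma_D}$, $\Lambda_{bg}=\Lambda_{\sigma_{bg}}$, and $\langle\cdot,\cdot\rangle$ is the duality pairing (the $L^2(\partial\Omega)$ inner product for $L^2$ data). Notation: $\sigma_{bg}^m=\operatorname{ess\,inf}_\Omega\sigma_{bg}$, $\sigma_{bg}^M=\operatorname{ess\,sup}_\Omega\sigma_{bg}$, $\sigma_a^m=\operatorname{ess\,inf}\sigma_a$, $\sigma_a^M=\operatorname{ess\,sup}\sigma_a$. *)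

theory Defs
  imports "HOL-Analysis.Analysis" "HOL-Probability.Essential_Supremum"
begin

definition partial :: "(real^'n \<Rightarrow> real) \<Rightarrow> 'n \<Rightarrow> real^'n \<Rightarrow> real" where
  "partial f i x = frechet_derivative f (at x) (axis i 1)"

coinductive smooth_fun :: "(real^'n \<Rightarrow> real) \<Rightarrow> bool" where
  "\<lbrakk> \<forall>x. f differentiable (at x); \<forall>i. smooth_fun (partial f i) \<rbrakk> \<Longrightarrow> smooth_fun f"

definition smooth_boundary :: "(real^'n) set \<Rightarrow> bool" where
  "smooth_boundary \<Omega> \<longleftrightarrow>
     (\<forall>p\<in>frontier \<Omega>. \<exists>r>0. \<exists>\<psi>. smooth_fun \<psi> \<and>
        (\<forall>x\<in>ball p r. x \<in> \<Omega> \<longleftrightarrow> \<psi> x < 0) \<and>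
        (\<forall>x\<in>ball p r. \<psi> x = 0 \<longrightarrow> frechet_derivative \<psi> (at x) \<noteq> (\<lambda>v. 0)))"

definition test_fun :: "(real^'n) set \<Rightarrow> (real^'n \<Rightarrow> real) \<Rightarrow> bool" where
  "test_fun \<Omega> \<phi> \<longleftrightarrow> smooth_fun \<phi> \<and> compact (closure {x. \<phi> x \<noteq> 0})
      \<and> closure {x. \<phi> x \<noteq> 0} \<subseteq> \<Omega>"

definition grad_of :: "(real^'n \<Rightarrow> real) \<Rightarrow> real^'n \<Rightarrow> real^'n" where
  "grad_of \<phi> x = (\<chi> i. partial \<phi> i x)"

definition L2_on :: "(real^'n) set \<Rightarrow> (real^'n \<Rightarrow> real) \<Rightarrow> bool" where
  "L2_on \<Omega> f \<longleftrightarrow> f \<in> borel_measurable (lebesgue_on \<Omega>) \<and>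
      integrable (lebesgue_on \<Omega>) (\<lambda>x. (f x)^2)"

definition has_weak_gradient :: "(real^'n) set \<Rightarrow> (real^'n \<Rightarrow> real) \<Rightarrow> (real^'n \<Rightarrow> real^'n) \<Rightarrow> bool" where
  "has_weak_gradient \<Omega> u w \<longleftrightarrow> L2_on \<Omega> u \<and> (\<forall>i. L2_on \<Omega> (\<lambda>x. w x $ i)) \<and>
     (\<forall>\<phi> i. test_fun \<Omega> \<phi> \<longrightarrow>
        integral\<^sup>L (lebesgue_on \<Omega>) (\<lambda>x. u x * partial \<phi> i x)
          = - integral\<^sup>L (lebesgue_on \<Omega>) (\<lambda>x. w x $ i * \<phi> x))"

definition H1 :: "(real^'n) set \<Rightarrow> (real^'n \<Rightarrow> real) \<Rightarrow> bool" where
  "H1 \<Omega> u \<longleftrightarrow> (\<exists>w. has_weak_gradient \<Omega> u w)"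

definition H1_norm :: "(real^'n) set \<Rightarrow> (real^'n \<Rightarrow> real) \<Rightarrow> (real^'n \<Rightarrow> real^'n) \<Rightarrow> real" where
  "H1_norm \<Omega> u w = sqrt (integral\<^sup>L (lebesgue_on \<Omega>) (\<lambda>x. (u x)^2)
                          + integral\<^sup>L (lebesgue_on \<Omega>) (\<lambda>x. (norm (w x))^2))"

definition H10 :: "(real^'n) set \<Rightarrow> (real^'n \<Rightarrow> real) \<Rightarrow> bool" where
  "H10 \<Omega> u \<longleftrightarrow> (\<exists>w \<phi>s. has_weak_gradient \<Omega> u w \<and> (\<forall>k. test_fun \<Omega> (\<phi>s k)) \<and>
      (\<lambda>k. H1_norm \<Omega> (\<lambda>x. u x - \<phi>s k x) (\<lambda>x. w x - grad_of (\<phi>s k) x)) \<longlonglongrightarrow> 0)"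

text \<open>Neumann datum g in H^{-1/2}_diamond(boundary), represented (via the trace
  isomorphism) by the functional G(phi) = <g, phi|boundary> on H1(Omega): a bounded
  linear functional on H1(Omega) vanishing on H1_0(Omega) and on constants.\<close>
definition neumann_datum :: "(real^'n) set \<Rightarrow> ((real^'n \<Rightarrow> real) \<Rightarrow> real) \<Rightarrow> bool" where
  "neumann_datum \<Omega> G \<longleftrightarrow>
     (\<forall>u v a b. H1 \<Omega> u \<and> H1 \<Omega> v \<longrightarrow> G (\<lambda>x. a * u x + b * v x) = a * G u + b * G v) \<and>
     (\<exists>C. \<forall>u w. has_weak_gradient \<Omega> u w \<longrightarrow> \<bar>G u\<bar> \<le> C * H1_norm \<Omega> u w) \<and>
     (\<forall>u. H10 \<Omega> u \<longrightarrow> G u = 0) \<and>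
     G (\<lambda>x. 1) = 0"

text \<open>Weak solution u (with weak gradient w) of div(sigma grad u) = 0, sigma d_n u = g.\<close>
definition weak_neumann_sol :: "(real^'n) set \<Rightarrow> (real^'n \<Rightarrow> real) \<Rightarrow> ((real^'n \<Rightarrow> real) \<Rightarrow> real)
    \<Rightarrow> (real^'n \<Rightarrow> real) \<Rightarrow> (real^'n \<Rightarrow> real^'n) \<Rightarrow> bool" where
  "weak_neumann_sol \<Omega> \<sigma> G u w \<longleftrightarrow> has_weak_gradient \<Omega> u w \<and>
     (\<forall>v z. has_weak_gradient \<Omega> v z \<longrightarrow>
        integral\<^sup>L (lebesgue_on \<Omega>) (\<lambda>x. \<sigma> x * (w x \<bullet> z x)) = G v)"

definition ess_sup_on :: "(real^'n) set \<Rightarrow> (real^'n \<Rightarrow> real) \<Rightarrow> ereal" where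
  "ess_sup_on \<Omega> f = esssup (lebesgue_on \<Omega>) (\<lambda>x. ereal (f x))"

definition ess_inf_on :: "(real^'n) set \<Rightarrow> (real^'n \<Rightarrow> real) \<Rightarrow> ereal" where
  "ess_inf_on \<Omega> f = - esssup (lebesgue_on \<Omega>) (\<lambda>x. - ereal (f x))"

definition conductivity :: "(real^'n) set \<Rightarrow> (real^'n \<Rightarrow> real) \<Rightarrow> bool" where
  "conductivity \<Omega> \<sigma> \<longleftrightarrow> \<sigma> \<in> borel_measurable (lebesgue_on \<Omega>) \<and>
     ess_sup_on \<Omega> \<sigma> < \<infinity> \<and> ess_inf_on \<Omega> \<sigma> > 0"

end

theory Submission
  imports Defs
begin

lemma L2_prod_integrable:
  fixes f g :: "'a \<Rightarrow> real"
  assumes [measurable]: "f \<in> borel_measurable M" "g \<in> borel_measurable M"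
    and "integrable M (\<lambda>x. (f x)^2)" "integrable M (\<lambda>x. (g x)^2)"
  shows "integrable M (\<lambda>x. f x * g x)"
proof (rule Bochner_Integration.integrable_bound)
  show "integrable M (\<lambda>x. (f x)^2 + (g x)^2)" using assms by auto
  show "AE x in M. norm (f x * g x) \<le> norm ((f x)^2 + (g x)^2)"
  proof (intro AE_I2)
    fix x
    have h1: "2 * \<bar>f x\<bar> * \<bar>g x\<bar> \<le> (f x)^2 + (g x)^2"
      using sum_squares_bound[of "\<bar>f x\<bar>" "\<bar>g x\<bar>"] by simp
    have h2: "0 \<le> \<bar>f x\<bar> * \<bar>g x\<bar>" by simp
    have "\<bar>f x * g x\<bar> \<le> (f x)^2 + (g x)^2"
      unfolding abs_mult using h1 h2 by linarith
    then show "norm (f x * g x) \<le> norm ((f x)^2 + (g x)^2)" by simp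
  qed
qed measurable

lemma inner_integrable:
  fixes p q :: "'a \<Rightarrow> real^'n" and \<sigma> :: "'a \<Rightarrow> real"
  assumes pm: "\<And>i. (\<lambda>x. p x $ i) \<in> borel_measurable M" "\<And>i. integrable M (\<lambda>x. (p x $ i)^2)"
    and qm: "\<And>i. (\<lambda>x. q x $ i) \<in> borel_measurable M" "\<And>i. integrable M (\<lambda>x. (q x $ i)^2)"
    and sm[measurable]: "\<sigma> \<in> borel_measurable M" and sb: "AE x in M. \<bar>\<sigma> x\<bar> \<le> C"
  shows "integrable M (\<lambda>x. \<sigma> x * (p x \<bullet> q x))"
proof -
  have pq: "(\<lambda>x. p x \<bullet> q x) = (\<lambda>x. \<Sum>i\<in>UNIV. p x $ i * q x $ i)"
    by (simp add: inner_vec_def)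
  have [measurable]: "(\<lambda>x. p x \<bullet> q x) \<in> borel_measurable M"
    unfolding pq using pm(1) qm(1) by measurable
  have ii: "integrable M (\<lambda>x. p x \<bullet> q x)"
    unfolding pq by (rule Bochner_Integration.integrable_sum, rule L2_prod_integrable) (use pm qm in auto)
  show ?thesis
  proof (rule Bochner_Integration.integrable_bound)
    show "integrable M (\<lambda>x. C * (p x \<bullet> q x))" using ii by auto
    show "AE x in M. norm (\<sigma> x * (p x \<bullet> q x)) \<le> norm (C * (p x \<bullet> q x))"
      using sb by eventually_elim (auto simp: abs_mult intro: mult_right_mono)
  qed measurable
qed


lemma core:
  fixes M :: "'a measure" and a b :: "'a \<Rightarrow> real" and p q :: "'a \<Rightarrow> real^'n"
    and D :: "'a set" and GU GV Ca Cb :: real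
  assumes am[measurable]: "a \<in> borel_measurable M" and bm[measurable]: "b \<in> borel_measurable M"
    and pm: "\<And>i. (\<lambda>x. p x $ i) \<in> borel_measurable M" "\<And>i. integrable M (\<lambda>x. (p x $ i)^2)"
    and qm: "\<And>i. (\<lambda>x. q x $ i) \<in> borel_measurable M" "\<And>i. integrable M (\<lambda>x. (q x $ i)^2)"
    and abnd: "AE x in M. 0 < a x \<and> a x \<le> Ca" and bbnd: "AE x in M. 0 < b x \<and> b x \<le> Cb"
    and out: "\<And>x. x \<notin> D \<Longrightarrow> a x = b x"
    and sep: "(AE x in M. x \<in> D \<longrightarrow> a x < b x) \<or> (AE x in M. x \<in> D \<longrightarrow> b x < a x)"
    and e1: "integral\<^sup>L M (\<lambda>x. a x * (p x \<bullet> p x)) = GU"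
    and e2: "integral\<^sup>L M (\<lambda>x. a x * (p x \<bullet> q x)) = GV"
    and e3: "integral\<^sup>L M (\<lambda>x. b x * (q x \<bullet> p x)) = GU"
    and e4: "integral\<^sup>L M (\<lambda>x. b x * (q x \<bullet> q x)) = GV"
  shows "GU - GV = 0 \<longleftrightarrow> (AE x in M. x \<in> D \<longrightarrow> q x = 0)"
proof -
  have aC: "AE x in M. \<bar>a x\<bar> \<le> Ca" using abnd by eventually_elim auto
  have bC: "AE x in M. \<bar>b x\<bar> \<le> Cb" using bbnd by eventually_elim auto
  note ia = inner_integrable[OF _ _ _ _ am aC] and ib = inner_integrable[OF _ _ _ _ bm bC]
  have app: "integrable M (\<lambda>x. a x * (p x \<bullet> p x))" by (rule ia) (use pm in auto)
  have apq: "integrable M (\<lambda>x. a x * (p x \<bullet> q x))" by (rule ia) (use pm qm in auto)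
  have aqq: "integrable M (\<lambda>x. a x * (q x \<bullet> q x))" by (rule ia) (use qm in auto)
  have bpp: "integrable M (\<lambda>x. b x * (p x \<bullet> p x))" by (rule ib) (use pm in auto)
  have bqp: "integrable M (\<lambda>x. b x * (q x \<bullet> p x))" by (rule ib) (use pm qm in auto)
  have bqq: "integrable M (\<lambda>x. b x * (q x \<bullet> q x))" by (rule ib) (use qm in auto)
  note meas = borel_measurable_integrable[OF app] borel_measurable_integrable[OF apq]
    borel_measurable_integrable[OF aqq] borel_measurable_integrable[OF bpp]
    borel_measurable_integrable[OF bqp] borel_measurable_integrable[OF bqq]
  show ?thesis
  proof
    assume Z: "AE x in M. x \<in> D \<longrightarrow> q x = 0"
    have "integral\<^sup>L M (\<lambda>x. a x * (p x \<bullet> q x)) = integral\<^sup>L M (\<lambda>x. b x * (q x \<bullet> p x))"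
    proof (rule integral_cong_AE)
      show "AE x in M. a x * (p x \<bullet> q x) = b x * (q x \<bullet> p x)"
        using Z by eventually_elim (metis out inner_commute inner_zero_right mult_zero_right)
    qed (use meas in auto)
    then show "GU - GV = 0" using e2 e3 by simp
  next
    assume "GU - GV = 0"
    hence G: "GU = GV" by simp
    from sep show "AE x in M. x \<in> D \<longrightarrow> q x = 0"
    proof
      assume S: "AE x in M. x \<in> D \<longrightarrow> a x < b x"
      define h where "h x = a x * ((p x - q x) \<bullet> (p x - q x))" for x
      define k where "k x = (b x - a x) * (q x \<bullet> q x)" for x
      have hx: "h x = a x * (p x \<bullet> p x) - 2 * (a x * (p x \<bullet> q x)) + a x * (q x \<bullet> q x)" for x
        unfolding h_def by (simp add: inner_diff_left inner_diff_right inner_commute algebra_simps)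
      have kx: "k x = b x * (q x \<bullet> q x) - a x * (q x \<bullet> q x)" for x
        unfolding k_def by (simp add: algebra_simps)
      have hi: "integrable M h" unfolding hx[abs_def] using app apq aqq by auto
      have ki: "integrable M k" unfolding kx[abs_def] using bqq aqq by auto
      have "integral\<^sup>L M h = GU - 2 * GV + integral\<^sup>L M (\<lambda>x. a x * (q x \<bullet> q x))"
        unfolding hx[abs_def] using app apq aqq e1 e2 by simp
      moreover have "integral\<^sup>L M k = GV - integral\<^sup>L M (\<lambda>x. a x * (q x \<bullet> q x))"
        unfolding kx[abs_def] using bqq aqq e4 by simp
      ultimately have sum0: "integral\<^sup>L M h + integral\<^sup>L M k = 0" using G by simp
      have hnn: "AE x in M. 0 \<le> h x" using abnd unfolding h_def by eventually_elim auto
      have knn: "AE x in M. 0 \<le> k x" using S unfolding k_def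
        by eventually_elim (metis out diff_self le_less mult_eq_0_iff diff_gt_0_iff_gt
            inner_ge_zero mult_nonneg_nonneg)
      have "integral\<^sup>L M h \<ge> 0" by (rule integral_nonneg_AE[OF hnn])
      moreover have "integral\<^sup>L M k \<ge> 0" by (rule integral_nonneg_AE[OF knn])
      ultimately have "integral\<^sup>L M k = 0" using sum0 by linarith
      hence "AE x in M. k x = 0" using integral_nonneg_eq_0_iff_AE[OF ki knn] by simp
      then show ?thesis using S unfolding k_def by eventually_elim auto
    next
      assume S: "AE x in M. x \<in> D \<longrightarrow> b x < a x"
      define h where "h x = b x * ((p x - q x) \<bullet> (p x - q x))" for x
      define k where "k x = (a x - b x) * (p x \<bullet> p x)" for x
      have hx: "h x = b x * (p x \<bullet> p x) - 2 * (b x * (q x \<bullet> p x)) + b x * (q x \<bullet> q x)" for x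
        unfolding h_def by (simp add: inner_diff_left inner_diff_right inner_commute algebra_simps)
      have kx: "k x = a x * (p x \<bullet> p x) - b x * (p x \<bullet> p x)" for x
        unfolding k_def by (simp add: algebra_simps)
      have hi: "integrable M h" unfolding hx[abs_def] using bpp bqp bqq by auto
      have ki: "integrable M k" unfolding kx[abs_def] using app bpp by auto
      have "integral\<^sup>L M h = integral\<^sup>L M (\<lambda>x. b x * (p x \<bullet> p x)) - 2 * GU + GV"
        unfolding hx[abs_def] using bpp bqp bqq e3 e4 by simp
      moreover have "integral\<^sup>L M k = GU - integral\<^sup>L M (\<lambda>x. b x * (p x \<bullet> p x))"
        unfolding kx[abs_def] using app bpp e1 by simp
      ultimately have sum0: "integral\<^sup>L M h + integral\<^sup>L M k = 0" using G by simp
      have hnn: "AE x in M. 0 \<le> h x" using bbnd unfolding h_def by eventually_elim auto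
      have knn: "AE x in M. 0 \<le> k x" using S unfolding k_def
        by eventually_elim (metis out diff_self le_less mult_eq_0_iff diff_gt_0_iff_gt
            inner_ge_zero mult_nonneg_nonneg)
      have "integral\<^sup>L M h \<ge> 0" by (rule integral_nonneg_AE[OF hnn])
      moreover have "integral\<^sup>L M k \<ge> 0" by (rule integral_nonneg_AE[OF knn])
      ultimately have "integral\<^sup>L M k = 0" "integral\<^sup>L M h = 0" using sum0 by linarith+
      hence "AE x in M. k x = 0" "AE x in M. h x = 0"
        using integral_nonneg_eq_0_iff_AE[OF ki knn] integral_nonneg_eq_0_iff_AE[OF hi hnn] by simp_all
      then show ?thesis using S bbnd unfolding k_def h_def by eventually_elim auto
    qed
  qed
qed


lemma cond_AE:
  assumes "conductivity \<Omega> \<sigma>"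
  shows "\<exists>C. AE x in lebesgue_on \<Omega>. 0 < \<sigma> x \<and> \<sigma> x \<le> C"
proof -
  let ?M = "lebesgue_on \<Omega>"
  let ?E1 = "esssup ?M (\<lambda>x. ereal (\<sigma> x))" and ?E2 = "esssup ?M (\<lambda>x. - ereal (\<sigma> x))"
  have s1: "?E1 < \<infinity>" using assms unfolding conductivity_def ess_sup_on_def by simp
  have "0 < - ?E2" using assms unfolding conductivity_def ess_inf_on_def by simp
  hence s2: "?E2 < 0" using ereal_uminus_less_reorder by fastforce
  obtain C where C: "?E1 \<le> ereal C"
  proof (cases ?E1)
    case (real r) then show ?thesis using that[of r] by simp
  next
    case PInf then show ?thesis using s1 by simp
  next
    case MInf then show ?thesis using that by simp
  qed
  have "AE x in ?M. 0 < \<sigma> x \<and> \<sigma> x \<le> C"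
    using esssup_AE[of "\<lambda>x. ereal (\<sigma> x)" ?M] esssup_AE[of "\<lambda>x. - ereal (\<sigma> x)" ?M]
  proof eventually_elim
    case (elim x)
    have "ereal (\<sigma> x) \<le> ereal C" using elim(1) C by (rule order_trans)
    moreover have "- ereal (\<sigma> x) < 0" using elim(2) s2 by (rule order_le_less_trans)
    ultimately show ?case by simp
  qed
  then show ?thesis by blast
qed

lemma sep_AE:
  assumes "ess_sup_on \<Omega> f < ess_inf_on \<Omega> g"
  shows "AE x in lebesgue_on \<Omega>. f x < g x"
  using esssup_AE[of "\<lambda>x. ereal (f x)" "lebesgue_on \<Omega>"] esssup_AE[of "\<lambda>x. - ereal (g x)" "lebesgue_on \<Omega>"]
proof eventually_elim
  case (elim x)
  have "ereal (f x) < - esssup (lebesgue_on \<Omega>) (\<lambda>x. - ereal (g x))"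
    using elim(1) assms unfolding ess_sup_on_def ess_inf_on_def by (rule order_le_less_trans)
  also have "\<dots> \<le> ereal (g x)" using elim(2) by (simp add: ereal_uminus_le_reorder)
  finally show ?case by simp
qed


theorem lemma3p1:
  fixes \<Omega> D :: "(real^'n) set"
    and \<sigma>bg \<sigma>a :: "real^'n \<Rightarrow> real"
    and G :: "(real^'n \<Rightarrow> real) \<Rightarrow> real"
    and uD ubg :: "real^'n \<Rightarrow> real"
    and wD wbg :: "real^'n \<Rightarrow> real^'n"
  assumes "CARD('n) \<ge> 2"
    and "open \<Omega>" and "connected \<Omega>" and "bounded \<Omega>" and "simply_connected \<Omega>"
    and "smooth_boundary \<Omega>"
    and "conductivity \<Omega> \<sigma>bg" and "conductivity \<Omega> \<sigma>a"
    and "D \<in> sets lebesgue" and "D \<subseteq> \<Omega>"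
    and "\<exists>\<D>. \<Union>\<D> = D \<and> (\<forall>C\<in>\<D>. connected C) \<and> pairwise disjnt \<D>"
    and "ess_sup_on \<Omega> \<sigma>a < ess_inf_on \<Omega> \<sigma>bg \<or> ess_inf_on \<Omega> \<sigma>a > ess_sup_on \<Omega> \<sigma>bg"
    and "neumann_datum \<Omega> G"
    and "weak_neumann_sol \<Omega> (\<lambda>x. if x \<in> D then \<sigma>a x else \<sigma>bg x) G uD wD"
    and "weak_neumann_sol \<Omega> \<sigma>bg G ubg wbg"
  shows "G uD - G ubg = 0 \<longleftrightarrow>
         integral\<^sup>L (lebesgue_on D) (\<lambda>x. \<sigma>bg x * (norm (wbg x))^2) = 0"
proof -
  let ?M = "lebesgue_on \<Omega>"
  define a where "a x = (if x \<in> D then \<sigma>a x else \<sigma>bg x)" for x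
  have \<Omega>L: "\<Omega> \<in> sets lebesgue" using assms(2) by (metis borel_open sets_completionI_sets sets_lborel)
  have DM[measurable]: "D \<in> sets ?M" using assms(9,10) \<Omega>L by (simp add: sets_restrict_space_iff)
  have bm[measurable]: "\<sigma>bg \<in> borel_measurable ?M" and sam[measurable]: "\<sigma>a \<in> borel_measurable ?M"
    using assms(7,8) unfolding conductivity_def by auto
  have am[measurable]: "a \<in> borel_measurable ?M" unfolding a_def by measurable
  have solD: "weak_neumann_sol \<Omega> a G uD wD" using assms(14) unfolding a_def[abs_def] .
  have hD: "has_weak_gradient \<Omega> uD wD" and hb: "has_weak_gradient \<Omega> ubg wbg"
    using solD assms(15) unfolding weak_neumann_sol_def by auto
  have pm: "\<And>i. (\<lambda>x. wD x $ i) \<in> borel_measurable ?M" "\<And>i. integrable ?M (\<lambda>x. (wD x $ i)^2)"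
    using hD unfolding has_weak_gradient_def L2_on_def by auto
  have qm: "\<And>i. (\<lambda>x. wbg x $ i) \<in> borel_measurable ?M" "\<And>i. integrable ?M (\<lambda>x. (wbg x $ i)^2)"
    using hb unfolding has_weak_gradient_def L2_on_def by auto
  obtain Cb where Cb: "AE x in ?M. 0 < \<sigma>bg x \<and> \<sigma>bg x \<le> Cb" using cond_AE[OF assms(7)] by blast
  obtain Ca' where Ca': "AE x in ?M. 0 < \<sigma>a x \<and> \<sigma>a x \<le> Ca'" using cond_AE[OF assms(8)] by blast
  have abnd: "AE x in ?M. 0 < a x \<and> a x \<le> max Ca' Cb"
    using Cb Ca' by eventually_elim (auto simp: a_def)
  have sep: "(AE x in ?M. x \<in> D \<longrightarrow> a x < \<sigma>bg x) \<or> (AE x in ?M. x \<in> D \<longrightarrow> \<sigma>bg x < a x)"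
    using assms(12)
  proof
    assume "ess_sup_on \<Omega> \<sigma>a < ess_inf_on \<Omega> \<sigma>bg"
    then have "AE x in ?M. \<sigma>a x < \<sigma>bg x" by (rule sep_AE)
    then have "AE x in ?M. x \<in> D \<longrightarrow> a x < \<sigma>bg x" by eventually_elim (simp add: a_def)
    then show ?thesis by blast
  next
    assume "ess_inf_on \<Omega> \<sigma>a > ess_sup_on \<Omega> \<sigma>bg"
    then have "AE x in ?M. \<sigma>bg x < \<sigma>a x" by (rule sep_AE)
    then have "AE x in ?M. x \<in> D \<longrightarrow> \<sigma>bg x < a x" by eventually_elim (simp add: a_def)
    then show ?thesis by blast
  qed
  have e1: "integral\<^sup>L ?M (\<lambda>x. a x * (wD x \<bullet> wD x)) = G uD"
    and e2: "integral\<^sup>L ?M (\<lambda>x. a x * (wD x \<bullet> wbg x)) = G ubg"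
    using solD hD hb unfolding weak_neumann_sol_def by auto
  have e3: "integral\<^sup>L ?M (\<lambda>x. \<sigma>bg x * (wbg x \<bullet> wD x)) = G uD"
    and e4: "integral\<^sup>L ?M (\<lambda>x. \<sigma>bg x * (wbg x \<bullet> wbg x)) = G ubg"
    using assms(15) hD hb unfolding weak_neumann_sol_def by auto
  have main: "G uD - G ubg = 0 \<longleftrightarrow> (AE x in ?M. x \<in> D \<longrightarrow> wbg x = 0)"
    by (rule core[OF am bm pm qm abnd Cb _ sep e1 e2 e3 e4]) (simp add: a_def)
  have bC: "AE x in ?M. \<bar>\<sigma>bg x\<bar> \<le> Cb" using Cb by eventually_elim auto
  have bqq: "integrable ?M (\<lambda>x. \<sigma>bg x * (wbg x \<bullet> wbg x))"
    by (rule inner_integrable[OF _ _ _ _ bm bC]) (use qm in auto)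
  have LD: "lebesgue_on D = restrict_space ?M D"
    using restrict_restrict_space[of \<Omega> lebesgue D] \<Omega>L assms(9,10)
    by (simp add: Int_absorb1)
  define f where "f x = indicator D x *\<^sub>R (\<sigma>bg x * (wbg x \<bullet> wbg x))" for x
  have fi: "integrable ?M f" unfolding f_def by (rule integrable_mult_indicator[OF DM bqq])
  have fnn: "AE x in ?M. 0 \<le> f x" using Cb by eventually_elim (auto simp: f_def indicator_def)
  have "integral\<^sup>L (lebesgue_on D) (\<lambda>x. \<sigma>bg x * (norm (wbg x))^2) = integral\<^sup>L ?M f"
    unfolding LD f_def by (subst integral_restrict_space) (auto simp: power2_norm_eq_inner)
  also have "\<dots> = 0 \<longleftrightarrow> (AE x in ?M. f x = 0)" by (rule integral_nonneg_eq_0_iff_AE[OF fi fnn])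
  also have "\<dots> \<longleftrightarrow> (AE x in ?M. x \<in> D \<longrightarrow> wbg x = 0)"
  proof
    assume "AE x in ?M. f x = 0" then show "AE x in ?M. x \<in> D \<longrightarrow> wbg x = 0"
      using Cb by eventually_elim (auto simp: f_def)
  next
    assume "AE x in ?M. x \<in> D \<longrightarrow> wbg x = 0" then show "AE x in ?M. f x = 0"
      by eventually_elim (auto simp: f_def indicator_def)
  qed
  finally show ?thesis using main by simp
qed

end
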